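(* Let $\mathbb{C}$ be a regular category such that for any three effective equivalence relations $\alpha,\beta,\gamma$ on any object $X$ of $\mathbb{C}$ we have $\alpha\cap(\beta\circ\gamma)=(\alpha\cap\beta)\circ(\alpha\cap\gamma)$. Then $\mathbb{C}$ is a majority category.
   Context: A category is regular if it has finite limits and coequalizers of kernel pairs and regular epimorphisms are pullback-stable; morphisms factor as regular epi followed by mono. Relations are subobjects of products; an equivalence relation on $X$ is effective if it is the kernel pair of some morphism out of $X$; $\cap$ denotes intersection (pullback) of subobjects. For $w:S\to W$ and a subobject $A$ of $W$, $w\in_S A$ means $w$ factors through a representative of $A$. The composite $R\circ S$ of relations represented by $(r_1,r_2):R_0\to X\times Y$ and $(s_1,s_2):S_0\to Y\times Z$ is the image of $(r_1p_1,s_2p_2):P\to X\times Z$, $(P,p_1,p_2)$ the pullback of $s_1$ along $r_2$. A ternary relation $R\leqslant X\times Y\times Z$ is majority-selecting if for all $S$ and $x,x':S\to X$, $y,y':S\to Y$, $z,z':S\to Z$: $(x,y,z')\in_S R$, $(x,y',z)\in_S R$, $(x',y,z)\in_S R$ imply $(x,y,z)\in_S R$. A category with products is a majority category if all its ternary relations are majority-selecting. *)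

theory Defs
  imports Main
begin

text \<open>Categories given by carrier sets of objects and arrows (relativised),
  with domain, codomain, identities and composition (Comp C g f = g after f).\<close>

record ('o, 'a) cat =
  Ob  :: "'o set"
  Ar  :: "'a set"
  Dom :: "'a \<Rightarrow> 'o"
  Cod :: "'a \<Rightarrow> 'o"
  Id  :: "'o \<Rightarrow> 'a"
  Comp :: "'a \<Rightarrow> 'a \<Rightarrow> 'a"

definition hom :: "('o, 'a) cat \<Rightarrow> 'a \<Rightarrow> 'o \<Rightarrow> 'o \<Rightarrow> bool" where
  "hom C f X Y \<longleftrightarrow> f \<in> Ar C \<and> Dom C f = X \<and> Cod C f = Y"

definition category :: "('o, 'a) cat \<Rightarrow> bool" where
  "category C \<longleftrightarrow>
     (\<forall>f \<in> Ar C. Dom C f \<in> Ob C \<and> Cod C f \<in> Ob C)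
   \<and> (\<forall>X \<in> Ob C. hom C (Id C X) X X)
   \<and> (\<forall>f \<in> Ar C. \<forall>g \<in> Ar C. Cod C f = Dom C g \<longrightarrow> hom C (Comp C g f) (Dom C f) (Cod C g))
   \<and> (\<forall>f \<in> Ar C. \<forall>g \<in> Ar C. \<forall>h \<in> Ar C. Cod C f = Dom C g \<longrightarrow> Cod C g = Dom C h \<longrightarrow>
        Comp C h (Comp C g f) = Comp C (Comp C h g) f)
   \<and> (\<forall>f \<in> Ar C. Comp C (Id C (Cod C f)) f = f \<and> Comp C f (Id C (Dom C f)) = f)"

definition mono :: "('o, 'a) cat \<Rightarrow> 'a \<Rightarrow> bool" where
  "mono C m \<longleftrightarrow> m \<in> Ar C \<and>
     (\<forall>g \<in> Ar C. \<forall>h \<in> Ar C. Cod C g = Dom C m \<longrightarrow> Cod C h = Dom C m \<longrightarrow> Dom C g = Dom C h \<longrightarrow>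
        Comp C m g = Comp C m h \<longrightarrow> g = h)"

definition terminal :: "('o, 'a) cat \<Rightarrow> 'o \<Rightarrow> bool" where
  "terminal C T \<longleftrightarrow> T \<in> Ob C \<and> (\<forall>X \<in> Ob C. \<exists>!f. hom C f X T)"

definition is_product2 :: "('o, 'a) cat \<Rightarrow> 'a \<Rightarrow> 'a \<Rightarrow> bool" where
  "is_product2 C p1 p2 \<longleftrightarrow> p1 \<in> Ar C \<and> p2 \<in> Ar C \<and> Dom C p1 = Dom C p2 \<and>
     (\<forall>x \<in> Ar C. \<forall>y \<in> Ar C. Dom C x = Dom C y \<longrightarrow> Cod C x = Cod C p1 \<longrightarrow> Cod C y = Cod C p2 \<longrightarrow>
        (\<exists>!h. hom C h (Dom C x) (Dom C p1) \<and> Comp C p1 h = x \<and> Comp C p2 h = y))"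

definition is_product3 :: "('o, 'a) cat \<Rightarrow> 'a \<Rightarrow> 'a \<Rightarrow> 'a \<Rightarrow> bool" where
  "is_product3 C p1 p2 p3 \<longleftrightarrow> p1 \<in> Ar C \<and> p2 \<in> Ar C \<and> p3 \<in> Ar C \<and>
     Dom C p1 = Dom C p2 \<and> Dom C p1 = Dom C p3 \<and>
     (\<forall>x \<in> Ar C. \<forall>y \<in> Ar C. \<forall>z \<in> Ar C. Dom C x = Dom C y \<longrightarrow> Dom C x = Dom C z \<longrightarrow>
        Cod C x = Cod C p1 \<longrightarrow> Cod C y = Cod C p2 \<longrightarrow> Cod C z = Cod C p3 \<longrightarrow>
        (\<exists>!h. hom C h (Dom C x) (Dom C p1) \<and> Comp C p1 h = x \<and> Comp C p2 h = y \<and> Comp C p3 h = z))"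

definition is_equalizer :: "('o, 'a) cat \<Rightarrow> 'a \<Rightarrow> 'a \<Rightarrow> 'a \<Rightarrow> bool" where
  "is_equalizer C f g e \<longleftrightarrow> f \<in> Ar C \<and> g \<in> Ar C \<and> e \<in> Ar C \<and>
     Dom C f = Dom C g \<and> Cod C f = Cod C g \<and> Cod C e = Dom C f \<and> Comp C f e = Comp C g e \<and>
     (\<forall>u \<in> Ar C. Cod C u = Dom C f \<longrightarrow> Comp C f u = Comp C g u \<longrightarrow>
        (\<exists>!h. hom C h (Dom C u) (Dom C e) \<and> Comp C e h = u))"

definition is_pullback :: "('o, 'a) cat \<Rightarrow> 'a \<Rightarrow> 'a \<Rightarrow> 'a \<Rightarrow> 'a \<Rightarrow> bool" where
  "is_pullback C f g p q \<longleftrightarrow> f \<in> Ar C \<and> g \<in> Ar C \<and> p \<in> Ar C \<and> q \<in> Ar C \<and>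
     Cod C f = Cod C g \<and> Dom C p = Dom C q \<and> Cod C p = Dom C f \<and> Cod C q = Dom C g \<and>
     Comp C f p = Comp C g q \<and>
     (\<forall>u \<in> Ar C. \<forall>v \<in> Ar C. Dom C u = Dom C v \<longrightarrow> Cod C u = Dom C f \<longrightarrow> Cod C v = Dom C g \<longrightarrow>
        Comp C f u = Comp C g v \<longrightarrow>
        (\<exists>!h. hom C h (Dom C u) (Dom C p) \<and> Comp C p h = u \<and> Comp C q h = v))"

definition is_coequalizer :: "('o, 'a) cat \<Rightarrow> 'a \<Rightarrow> 'a \<Rightarrow> 'a \<Rightarrow> bool" where
  "is_coequalizer C f g e \<longleftrightarrow> f \<in> Ar C \<and> g \<in> Ar C \<and> e \<in> Ar C \<and>
     Dom C f = Dom C g \<and> Cod C f = Cod C g \<and> Dom C e = Cod C f \<and> Comp C e f = Comp C e g \<and>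
     (\<forall>u \<in> Ar C. Dom C u = Cod C f \<longrightarrow> Comp C u f = Comp C u g \<longrightarrow>
        (\<exists>!h. hom C h (Cod C e) (Cod C u) \<and> Comp C h e = u))"

definition regular_epi :: "('o, 'a) cat \<Rightarrow> 'a \<Rightarrow> bool" where
  "regular_epi C e \<longleftrightarrow> (\<exists>f g. is_coequalizer C f g e)"

definition has_finite_limits :: "('o, 'a) cat \<Rightarrow> bool" where
  "has_finite_limits C \<longleftrightarrow>
     (\<exists>T. terminal C T)
   \<and> (\<forall>X \<in> Ob C. \<forall>Y \<in> Ob C. \<exists>p1 p2. is_product2 C p1 p2 \<and> Cod C p1 = X \<and> Cod C p2 = Y)
   \<and> (\<forall>f \<in> Ar C. \<forall>g \<in> Ar C. Dom C f = Dom C g \<longrightarrow> Cod C f = Cod C g \<longrightarrow> (\<exists>e. is_equalizer C f g e))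
   \<and> (\<forall>f \<in> Ar C. \<forall>g \<in> Ar C. Cod C f = Cod C g \<longrightarrow> (\<exists>p q. is_pullback C f g p q))"

definition regular_category :: "('o, 'a) cat \<Rightarrow> bool" where
  "regular_category C \<longleftrightarrow> category C \<and> has_finite_limits C
   \<and> (\<forall>f p q. is_pullback C f f p q \<longrightarrow> (\<exists>e. is_coequalizer C p q e))
   \<and> (\<forall>f g p q. is_pullback C f g p q \<longrightarrow> regular_epi C f \<longrightarrow> regular_epi C q)"

text \<open>Binary relations on X: subobjects (monos) of a product X\<times>X given by a product
  cone (pi1, pi2).\<close>

definition eff_eqrel :: "('o, 'a) cat \<Rightarrow> 'a \<Rightarrow> 'a \<Rightarrow> 'a \<Rightarrow> bool" where
  "eff_eqrel C pi1 pi2 a \<longleftrightarrow> is_product2 C pi1 pi2 \<and> Cod C pi1 = Cod C pi2 \<and>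
     mono C a \<and> Cod C a = Dom C pi1 \<and>
     (\<exists>f \<in> Ar C. Dom C f = Cod C pi1 \<and> is_pullback C f f (Comp C pi1 a) (Comp C pi2 a))"

definition rel_inter :: "('o, 'a) cat \<Rightarrow> 'a \<Rightarrow> 'a \<Rightarrow> 'a \<Rightarrow> bool" where
  "rel_inter C a b m \<longleftrightarrow> (\<exists>u v. is_pullback C a b u v \<and> m = Comp C a u)"

text \<open>m represents the composite relation r \<circ> s (r \<subseteq> X\<times>X first, then s \<subseteq> X\<times>X):
  image of (r1 p1, s2 p2) where (p1,p2) is the pullback of s1 along r2.\<close>

definition rel_comp :: "('o, 'a) cat \<Rightarrow> 'a \<Rightarrow> 'a \<Rightarrow> 'a \<Rightarrow> 'a \<Rightarrow> 'a \<Rightarrow> bool" where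
  "rel_comp C pi1 pi2 r s m \<longleftrightarrow>
     (\<exists>p1 p2 t e. is_pullback C (Comp C pi2 r) (Comp C pi1 s) p1 p2 \<and>
        hom C t (Dom C p1) (Dom C pi1) \<and>
        Comp C pi1 t = Comp C (Comp C pi1 r) p1 \<and> Comp C pi2 t = Comp C (Comp C pi2 s) p2 \<and>
        regular_epi C e \<and> mono C m \<and> Cod C m = Dom C pi1 \<and> Dom C m = Cod C e \<and>
        t = Comp C m e)"

definition same_subobj :: "('o, 'a) cat \<Rightarrow> 'a \<Rightarrow> 'a \<Rightarrow> bool" where
  "same_subobj C m n \<longleftrightarrow> Cod C m = Cod C n \<and>
     (\<exists>h. hom C h (Dom C n) (Dom C m) \<and> Comp C m h = n) \<and>
     (\<exists>k. hom C k (Dom C m) (Dom C n) \<and> Comp C n k = m)"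

definition modular_distrib_hyp :: "('o, 'a) cat \<Rightarrow> bool" where
  "modular_distrib_hyp C \<longleftrightarrow>
     (\<forall>pi1 pi2 a b c. eff_eqrel C pi1 pi2 a \<and> eff_eqrel C pi1 pi2 b \<and> eff_eqrel C pi1 pi2 c \<longrightarrow>
       (\<forall>bc abc ab ac abac.
          rel_comp C pi1 pi2 b c bc \<and> rel_inter C a bc abc \<and>
          rel_inter C a b ab \<and> rel_inter C a c ac \<and> rel_comp C pi1 pi2 ab ac abac
          \<longrightarrow> same_subobj C abc abac))"

definition mem3 :: "('o, 'a) cat \<Rightarrow> 'a \<Rightarrow> 'a \<Rightarrow> 'a \<Rightarrow> 'a \<Rightarrow> 'a \<Rightarrow> 'a \<Rightarrow> 'a \<Rightarrow> bool" where
  "mem3 C p1 p2 p3 r x y z \<longleftrightarrow>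
     (\<exists>h. hom C h (Dom C x) (Dom C r) \<and>
        Comp C (Comp C p1 r) h = x \<and> Comp C (Comp C p2 r) h = y \<and> Comp C (Comp C p3 r) h = z)"

definition majority_selecting :: "('o, 'a) cat \<Rightarrow> 'a \<Rightarrow> 'a \<Rightarrow> 'a \<Rightarrow> 'a \<Rightarrow> bool" where
  "majority_selecting C p1 p2 p3 r \<longleftrightarrow>
     (\<forall>S x x' y y' z z'.
        hom C x S (Cod C p1) \<longrightarrow> hom C x' S (Cod C p1) \<longrightarrow>
        hom C y S (Cod C p2) \<longrightarrow> hom C y' S (Cod C p2) \<longrightarrow>
        hom C z S (Cod C p3) \<longrightarrow> hom C z' S (Cod C p3) \<longrightarrow>
        mem3 C p1 p2 p3 r x y z' \<longrightarrow> mem3 C p1 p2 p3 r x y' z \<longrightarrow> mem3 C p1 p2 p3 r x' y z \<longrightarrow>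
        mem3 C p1 p2 p3 r x y z)"

definition majority_category :: "('o, 'a) cat \<Rightarrow> bool" where
  "majority_category C \<longleftrightarrow>
     (\<forall>p1 p2 p3 r. is_product3 C p1 p2 p3 \<and> mono C r \<and> Cod C r = Dom C p1 \<longrightarrow>
        majority_selecting C p1 p2 p3 r)"

end

theory Submission
  imports Defs
begin


locale ccat =
  fixes C :: "('o, 'a) cat"
  assumes cat: "category C"
begin

abbreviation cmp :: "'a \<Rightarrow> 'a \<Rightarrow> 'a" (infixr "\<cdot>" 55) where "g \<cdot> f \<equiv> Comp C g f"
abbreviation ar :: "'a \<Rightarrow> bool" where "ar f \<equiv> f \<in> Ar C"
abbreviation dm :: "'a \<Rightarrow> 'o" where "dm f \<equiv> Dom C f"
abbreviation cd :: "'a \<Rightarrow> 'o" where "cd f \<equiv> Cod C f"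

lemma comp_ar[simp]: "ar f \<Longrightarrow> ar g \<Longrightarrow> cd f = dm g \<Longrightarrow> ar (g \<cdot> f)"
  using cat unfolding category_def hom_def by blast
lemma comp_dom[simp]: "ar f \<Longrightarrow> ar g \<Longrightarrow> cd f = dm g \<Longrightarrow> dm (g \<cdot> f) = dm f"
  using cat unfolding category_def hom_def by blast
lemma comp_cod[simp]: "ar f \<Longrightarrow> ar g \<Longrightarrow> cd f = dm g \<Longrightarrow> cd (g \<cdot> f) = cd g"
  using cat unfolding category_def hom_def by blast
lemma assoc[simp]: "ar f \<Longrightarrow> ar g \<Longrightarrow> ar h \<Longrightarrow> cd f = dm g \<Longrightarrow> cd g = dm h \<Longrightarrow> (h \<cdot> g) \<cdot> f = h \<cdot> (g \<cdot> f)"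
  using cat unfolding category_def by metis
lemma dom_ob: "ar f \<Longrightarrow> dm f \<in> Ob C"
  using cat unfolding category_def by blast

lemma ext_eq:
  assumes "a \<cdot> b = c \<cdot> d" "ar a" "ar b" "ar c" "ar d" "ar x" "cd b = dm a" "cd d = dm c"
    "cd x = dm b" "dm b = dm d"
  shows "a \<cdot> b \<cdot> x = c \<cdot> d \<cdot> x"
  by (metis assms assoc)

lemma ext1:
  assumes "a \<cdot> b = c" "ar a" "ar b" "ar x" "cd b = dm a" "cd x = dm b"
  shows "a \<cdot> (b \<cdot> x) = c \<cdot> x"
  using assms assoc by metis

lemma pbD: assumes "is_pullback C f g p q"
  shows "ar f" "ar g" "ar p" "ar q" "cd f = cd g" "dm p = dm q" "cd p = dm f" "cd q = dm g" "f \<cdot> p = g \<cdot> q"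
  using assms unfolding is_pullback_def by auto

lemma pb_lift:
  assumes "is_pullback C f g p q" "ar u" "ar v" "dm u = dm v" "cd u = dm f" "cd v = dm g" "f \<cdot> u = g \<cdot> v"
  obtains h where "ar h" "dm h = dm u" "cd h = dm p" "p \<cdot> h = u" "q \<cdot> h = v"
proof -
  have "\<exists>!h. hom C h (dm u) (dm p) \<and> p \<cdot> h = u \<and> q \<cdot> h = v"
    using assms unfolding is_pullback_def by blast
  then show ?thesis using that unfolding hom_def by blast
qed

lemma pb_uniq:
  assumes pb: "is_pullback C f g p q" and "ar h" "ar k" "dm h = dm k" "cd h = dm p" "cd k = dm p"
    "p \<cdot> h = p \<cdot> k" "q \<cdot> h = q \<cdot> k"
  shows "h = k"
proof -
  note D = pbD[OF pb]
  have 1: "f \<cdot> (p \<cdot> h) = g \<cdot> (q \<cdot> h)"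
    using ext_eq[OF D(9), of h] D assms by simp
  have a: "ar (p \<cdot> h)" "ar (q \<cdot> h)" "dm (p \<cdot> h) = dm (q \<cdot> h)" "cd (p \<cdot> h) = dm f" "cd (q \<cdot> h) = dm g"
    using D assms by auto
  have "\<exists>!hh. hom C hh (dm (p \<cdot> h)) (dm p) \<and> p \<cdot> hh = p \<cdot> h \<and> q \<cdot> hh = q \<cdot> h"
    using pb a 1 unfolding is_pullback_def by blast
  moreover have "hom C h (dm (p \<cdot> h)) (dm p) \<and> p \<cdot> h = p \<cdot> h \<and> q \<cdot> h = q \<cdot> h"
    using assms D by (simp add: hom_def)
  moreover have "hom C k (dm (p \<cdot> h)) (dm p) \<and> p \<cdot> k = p \<cdot> h \<and> q \<cdot> k = q \<cdot> h"
    using assms D by (simp add: hom_def)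
  ultimately show ?thesis by blast
qed

lemma prodD: assumes "is_product2 C p1 p2" shows "ar p1" "ar p2" "dm p1 = dm p2"
  using assms unfolding is_product2_def by auto

lemma prod_lift:
  assumes "is_product2 C p1 p2" "ar x" "ar y" "dm x = dm y" "cd x = cd p1" "cd y = cd p2"
  obtains h where "ar h" "dm h = dm x" "cd h = dm p1" "p1 \<cdot> h = x" "p2 \<cdot> h = y"
proof -
  have "\<exists>!h. hom C h (dm x) (dm p1) \<and> p1 \<cdot> h = x \<and> p2 \<cdot> h = y"
    using assms unfolding is_product2_def by blast
  then show ?thesis using that unfolding hom_def by blast
qed

lemma prod_uniq:
  assumes pr: "is_product2 C p1 p2" and "ar h" "ar k" "dm h = dm k" "cd h = dm p1" "cd k = dm p1"
    "p1 \<cdot> h = p1 \<cdot> k" "p2 \<cdot> h = p2 \<cdot> k"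
  shows "h = k"
proof -
  note D = prodD[OF pr]
  have a: "ar (p1 \<cdot> h)" "ar (p2 \<cdot> h)" "dm (p1 \<cdot> h) = dm (p2 \<cdot> h)" "cd (p1 \<cdot> h) = cd p1" "cd (p2 \<cdot> h) = cd p2"
    using D assms by auto
  have "\<exists>!hh. hom C hh (dm (p1 \<cdot> h)) (dm p1) \<and> p1 \<cdot> hh = p1 \<cdot> h \<and> p2 \<cdot> hh = p2 \<cdot> h"
    using pr a unfolding is_product2_def by blast
  moreover have "hom C h (dm (p1 \<cdot> h)) (dm p1) \<and> p1 \<cdot> h = p1 \<cdot> h \<and> p2 \<cdot> h = p2 \<cdot> h"
    using assms D by (simp add: hom_def)
  moreover have "hom C k (dm (p1 \<cdot> h)) (dm p1) \<and> p1 \<cdot> k = p1 \<cdot> h \<and> p2 \<cdot> k = p2 \<cdot> h"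
    using assms D by (simp add: hom_def)
  ultimately show ?thesis by blast
qed

lemma prod3D: assumes "is_product3 C p1 p2 p3" shows "ar p1" "ar p2" "ar p3" "dm p2 = dm p1" "dm p3 = dm p1"
  using assms unfolding is_product3_def by auto

lemma prod3_lift:
  assumes "is_product3 C p1 p2 p3" "ar x" "ar y" "ar z" "dm y = dm x" "dm z = dm x"
    "cd x = cd p1" "cd y = cd p2" "cd z = cd p3"
  obtains h where "ar h" "dm h = dm x" "cd h = dm p1" "p1 \<cdot> h = x" "p2 \<cdot> h = y" "p3 \<cdot> h = z"
proof -
  note H = assms(1)[unfolded is_product3_def, THEN conjunct2, THEN conjunct2, THEN conjunct2,
     THEN conjunct2, THEN conjunct2, rule_format]
  have "\<exists>!h. hom C h (dm x) (dm p1) \<and> p1 \<cdot> h = x \<and> p2 \<cdot> h = y \<and> p3 \<cdot> h = z"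
    using H[OF assms(2,3,4) assms(5,6)[symmetric] assms(7,8,9)] .
  then show ?thesis using that unfolding hom_def by blast
qed

lemma prod3_uniq:
  assumes pr: "is_product3 C p1 p2 p3" and "ar h" "ar k" "dm h = dm k" "cd h = dm p1" "cd k = dm p1"
    "p1 \<cdot> h = p1 \<cdot> k" "p2 \<cdot> h = p2 \<cdot> k" "p3 \<cdot> h = p3 \<cdot> k"
  shows "h = k"
proof -
  note D = prod3D[OF pr]
  note H = pr[unfolded is_product3_def, THEN conjunct2, THEN conjunct2, THEN conjunct2,
     THEN conjunct2, THEN conjunct2, rule_format]
  have a: "ar (p1 \<cdot> h)" "ar (p2 \<cdot> h)" "ar (p3 \<cdot> h)" "dm (p2 \<cdot> h) = dm (p1 \<cdot> h)" "dm (p3 \<cdot> h) = dm (p1 \<cdot> h)"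
     "cd (p1 \<cdot> h) = cd p1" "cd (p2 \<cdot> h) = cd p2" "cd (p3 \<cdot> h) = cd p3"
    using D assms by auto
  have "\<exists>!hh. hom C hh (dm (p1 \<cdot> h)) (dm p1) \<and> p1 \<cdot> hh = p1 \<cdot> h \<and> p2 \<cdot> hh = p2 \<cdot> h \<and> p3 \<cdot> hh = p3 \<cdot> h"
    using H[OF a(1,2,3) a(4,5)[symmetric] a(6,7,8)] .
  moreover have "hom C h (dm (p1 \<cdot> h)) (dm p1) \<and> p1 \<cdot> h = p1 \<cdot> h \<and> p2 \<cdot> h = p2 \<cdot> h \<and> p3 \<cdot> h = p3 \<cdot> h"
    using assms D by (simp add: hom_def)
  moreover have "hom C k (dm (p1 \<cdot> h)) (dm p1) \<and> p1 \<cdot> k = p1 \<cdot> h \<and> p2 \<cdot> k = p2 \<cdot> h \<and> p3 \<cdot> k = p3 \<cdot> h"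
    using assms D by (simp add: hom_def)
  ultimately show ?thesis by blast
qed

lemma coeqD: assumes "is_coequalizer C f g e"
  shows "ar f" "ar g" "ar e" "dm f = dm g" "cd f = cd g" "dm e = cd f" "e \<cdot> f = e \<cdot> g"
  using assms unfolding is_coequalizer_def by auto

lemma reD: "regular_epi C e \<Longrightarrow> ar e"
  unfolding regular_epi_def using coeqD by blast

lemma re_epi:
  assumes re: "regular_epi C e" and "ar u" "ar v" "dm u = cd e" "dm v = cd e" "cd u = cd v" "u \<cdot> e = v \<cdot> e"
  shows "u = v"
proof -
  obtain f g where co: "is_coequalizer C f g e" using re unfolding regular_epi_def by blast
  note D = coeqD[OF co]
  have 1: "(u \<cdot> e) \<cdot> f = (u \<cdot> e) \<cdot> g" using D assms by simp
  have a: "ar (u \<cdot> e)" "dm (u \<cdot> e) = cd f" using D assms by auto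
  have "\<exists>!h. hom C h (cd e) (cd (u \<cdot> e)) \<and> h \<cdot> e = u \<cdot> e"
    using co 1 a unfolding is_coequalizer_def by blast
  moreover have "hom C u (cd e) (cd (u \<cdot> e)) \<and> u \<cdot> e = u \<cdot> e"
    using assms D by (simp add: hom_def)
  moreover have "hom C v (cd e) (cd (u \<cdot> e)) \<and> v \<cdot> e = u \<cdot> e"
    using assms D by (simp add: hom_def)
  ultimately show ?thesis by blast
qed

lemma mono_lift:
  assumes re: "regular_epi C e" and mo: "mono C r" and "ar n" "ar d" "dm d = dm e" "cd d = dm r"
    "dm n = cd e" "cd n = cd r" "r \<cdot> d = n \<cdot> e"
  obtains h where "ar h" "dm h = cd e" "cd h = dm r" "r \<cdot> h = n"
proof -
  obtain f g where co: "is_coequalizer C f g e" using re unfolding regular_epi_def by blast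
  note D = coeqD[OF co]
  have ar: "ar r" using mo unfolding mono_def by blast
  have eq: "r \<cdot> (d \<cdot> f) = r \<cdot> (d \<cdot> g)"
  proof -
    have "r \<cdot> (d \<cdot> f) = n \<cdot> e \<cdot> f" using ext_eq[OF assms(9), of f] D assms ar by simp
    also have "\<dots> = n \<cdot> e \<cdot> g" using D assms by simp
    also have "\<dots> = r \<cdot> (d \<cdot> g)" using ext_eq[OF assms(9), of g] D assms ar by simp
    finally show ?thesis .
  qed
  have a: "ar (d \<cdot> f)" "ar (d \<cdot> g)" "cd (d \<cdot> f) = dm r" "cd (d \<cdot> g) = dm r" "dm (d \<cdot> f) = dm (d \<cdot> g)"
    using D assms by auto
  have 1: "d \<cdot> f = d \<cdot> g" using mo a eq unfolding mono_def by blast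
  note H = co[unfolded is_coequalizer_def, THEN conjunct2, THEN conjunct2, THEN conjunct2,
     THEN conjunct2, THEN conjunct2, THEN conjunct2, THEN conjunct2, rule_format]
  have "\<exists>!h. hom C h (cd e) (cd d) \<and> h \<cdot> e = d"
    using H[OF assms(4) _ 1] D assms by simp
  then obtain h where h: "ar h" "dm h = cd e" "cd h = cd d" "h \<cdot> e = d" unfolding hom_def by blast
  have 2: "(r \<cdot> h) \<cdot> e = n \<cdot> e" using h assms ar D by simp
  have "r \<cdot> h = n"
    by (rule re_epi[OF re _ _ _ _ _ 2]) (use h assms ar D in simp_all)
  then show ?thesis using that h assms by simp
qed

end



locale rcat = ccat +
  assumes reg: "regular_category C"
begin

lemma fl: "has_finite_limits C" using reg unfolding regular_category_def by blast

lemma pb_ex: assumes "ar f" "ar g" "cd f = cd g" obtains p q where "is_pullback C f g p q"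
proof -
  note H = fl[unfolded has_finite_limits_def, THEN conjunct2, THEN conjunct2, THEN conjunct2, rule_format]
  show ?thesis using H[OF assms] that by blast
qed

lemma prod_ex: assumes "X \<in> Ob C" "Y \<in> Ob C"
  obtains p1 p2 where "is_product2 C p1 p2" "cd p1 = X" "cd p2 = Y"
proof -
  note H = fl[unfolded has_finite_limits_def, THEN conjunct2, THEN conjunct1, rule_format]
  show ?thesis using H[OF assms] that by blast
qed

lemma coeq_kp: assumes "is_pullback C f f p q" obtains e where "is_coequalizer C p q e"
proof -
  note H = reg[unfolded regular_category_def, THEN conjunct2, THEN conjunct2, THEN conjunct1, rule_format]
  show ?thesis using H[OF assms] that by blast
qed

lemma re_stable: assumes "is_pullback C f g p q" "regular_epi C f" shows "regular_epi C q"
proof -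
  note H = reg[unfolded regular_category_def, THEN conjunct2, THEN conjunct2, THEN conjunct2, rule_format]
  show ?thesis using H[OF assms] .
qed

lemma image:
  assumes af: "ar f"
  obtains e m where "regular_epi C e" "mono C m" "ar e" "ar m" "dm e = dm f" "cd e = dm m"
    "cd m = cd f" "m \<cdot> e = f"
proof -
  obtain p q where pb: "is_pullback C f f p q" using pb_ex af by blast
  obtain e where co: "is_coequalizer C p q e" using coeq_kp pb by blast
  note P = pbD[OF pb]
  note E = coeqD[OF co]
  have re: "regular_epi C e" using co unfolding regular_epi_def by blast
  note H = co[unfolded is_coequalizer_def, THEN conjunct2, THEN conjunct2, THEN conjunct2,
     THEN conjunct2, THEN conjunct2, THEN conjunct2, THEN conjunct2, rule_format]
  have "\<exists>!m. hom C m (cd e) (cd f) \<and> m \<cdot> e = f"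
    using H[OF af _ P(9)] P by simp
  then obtain m where m: "ar m" "dm m = cd e" "cd m = cd f" "m \<cdot> e = f" unfolding hom_def by blast
  have "mono C m"
    unfolding mono_def
  proof (intro conjI ballI impI)
    show "ar m" by fact
    fix g h assume g: "ar g" and h: "ar h" and gc: "cd g = dm m" and hc: "cd h = dm m"
      and gh: "dm g = dm h" and mgh: "m \<cdot> g = m \<cdot> h"
    have ceg: "cd e = cd g" using gc m(2) by simp
    obtain P1 Q1 where pb1: "is_pullback C e g P1 Q1" using pb_ex[OF E(3) g ceg] by blast
    note P1 = pbD[OF pb1]
    have re1: "regular_epi C Q1" using re_stable[OF pb1 re] .
    obtain P2 Q2 where pb2: "is_pullback C e (h \<cdot> Q1) P2 Q2"
    proof -
      have hq: "ar (h \<cdot> Q1)" "cd e = cd (h \<cdot> Q1)" using P1(4,8) h hc gh m(2) by simp_all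
      show ?thesis using pb_ex[OF E(3) hq] that by blast
    qed
    note P2 = pbD[OF pb2]
    have re2: "regular_epi C Q2" using re_stable[OF pb2 re] .
    have A: "ar P1" "ar Q1" "ar P2" "ar Q2" "cd P1 = dm e" "cd Q1 = dm g" "cd Q2 = dm Q1" "dm P2 = dm Q2"
      "dm P1 = dm Q1" "cd P2 = dm e"
      using P1 P2 g h gh by auto
    have s1: "e \<cdot> P1 \<cdot> Q2 = g \<cdot> Q1 \<cdot> Q2" using ext_eq[OF P1(9), of Q2] A g E by simp
    have s2: "m \<cdot> g \<cdot> Q1 \<cdot> Q2 = m \<cdot> h \<cdot> Q1 \<cdot> Q2"
      using ext_eq[OF mgh, of "Q1 \<cdot> Q2"] A g h gc hc gh m by simp
    have s3: "e \<cdot> P2 = h \<cdot> Q1 \<cdot> Q2" using P2(9) A h gh by simp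
    have fe: "f \<cdot> (P1 \<cdot> Q2) = f \<cdot> P2"
    proof -
      have "f \<cdot> (P1 \<cdot> Q2) = (m \<cdot> e) \<cdot> (P1 \<cdot> Q2)" using m(4) by simp
      also have "\<dots> = m \<cdot> e \<cdot> P1 \<cdot> Q2" using A m(1-3) E by simp
      also have "\<dots> = m \<cdot> g \<cdot> Q1 \<cdot> Q2" using s1 by simp
      also have "\<dots> = m \<cdot> h \<cdot> Q1 \<cdot> Q2" using s2 by simp
      also have "\<dots> = m \<cdot> e \<cdot> P2" using s3 by simp
      also have "\<dots> = (m \<cdot> e) \<cdot> P2" using A m(1-3) E by simp
      also have "\<dots> = f \<cdot> P2" using m(4) by simp
      finally show ?thesis .
    qed
    obtain k where k: "ar k" "dm k = dm (P1 \<cdot> Q2)" "cd k = dm p" "p \<cdot> k = P1 \<cdot> Q2" "q \<cdot> k = P2"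
      using pb_lift[OF pb, of "P1 \<cdot> Q2" P2] fe A E P by auto
    have s4: "e \<cdot> p \<cdot> k = e \<cdot> q \<cdot> k" using ext_eq[OF E(7), of k] E k P by simp
    have "(g \<cdot> Q1) \<cdot> Q2 = (h \<cdot> Q1) \<cdot> Q2"
    proof -
      have "(g \<cdot> Q1) \<cdot> Q2 = e \<cdot> P1 \<cdot> Q2" using s1 A g by simp
      also have "\<dots> = e \<cdot> p \<cdot> k" using k(4) by simp
      also have "\<dots> = e \<cdot> q \<cdot> k" using s4 .
      also have "\<dots> = (h \<cdot> Q1) \<cdot> Q2" using k(5) s3 A h gh by simp
      finally show ?thesis .
    qed
    then have "g \<cdot> Q1 = h \<cdot> Q1"
      by (rule re_epi[OF re2, rotated -1]) (use A g h gc hc gh re2 in \<open>auto dest: reD\<close>)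
    then show "g = h"
      by (rule re_epi[OF re1, rotated -1]) (use A g h gc hc gh in \<open>auto dest: reD\<close>)
  qed
  then show ?thesis using that re E m P by auto
qed

lemma kernel:
  assumes pr: "is_product2 C pi1 pi2" and "cd pi1 = cd pi2" "ar f" "dm f = cd pi1"
  obtains a where "eff_eqrel C pi1 pi2 a" "mono C a" "ar a" "cd a = dm pi1"
    "is_pullback C f f (pi1 \<cdot> a) (pi2 \<cdot> a)"
proof -
  note D = prodD[OF pr]
  obtain u v where pb: "is_pullback C f f u v" using pb_ex[OF assms(3) assms(3) refl] by blast
  note P = pbD[OF pb]
  have uv: "ar u" "ar v" "dm u = dm v" "cd u = cd pi1" "cd v = cd pi2"
    using P assms(2,4) by simp_all
  obtain a where a: "ar a" "dm a = dm u" "cd a = dm pi1" "pi1 \<cdot> a = u" "pi2 \<cdot> a = v"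
    using prod_lift[OF pr uv] by blast
  have mo: "mono C a"
    unfolding mono_def
  proof (intro conjI ballI impI)
    show "ar a" by fact
    fix g h assume g: "ar g" and h: "ar h" and gc: "cd g = dm a" and hc: "cd h = dm a"
      and gh: "dm g = dm h" and agh: "a \<cdot> g = a \<cdot> h"
    have "(pi1 \<cdot> a) \<cdot> g = pi1 \<cdot> a \<cdot> g" "(pi1 \<cdot> a) \<cdot> h = pi1 \<cdot> a \<cdot> h"
      "(pi2 \<cdot> a) \<cdot> g = pi2 \<cdot> a \<cdot> g" "(pi2 \<cdot> a) \<cdot> h = pi2 \<cdot> a \<cdot> h"
      using assoc a(1,3) D g h gc hc by simp_all
    then have "u \<cdot> g = u \<cdot> h" "v \<cdot> g = v \<cdot> h" using agh a(4,5) by simp_all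
    moreover have "cd g = dm u" "cd h = dm u" using gc hc a(2) by simp_all
    ultimately show "g = h" using pb_uniq[OF pb g h gh] by blast
  qed
  have pb': "is_pullback C f f (pi1 \<cdot> a) (pi2 \<cdot> a)" using pb a(4,5) by simp
  have "eff_eqrel C pi1 pi2 a" unfolding eff_eqrel_def using pr assms(2,3,4) mo a(3) pb' by blast
  then show ?thesis using that mo a(1,3) pb' by blast
qed

end



context rcat
begin

lemma ker_lift:
  assumes pb: "is_pullback C f f (pi1 \<cdot> a) (pi2 \<cdot> a)" and T: "ar pi1" "ar pi2" "ar a" "cd a = dm pi1"
    "dm pi1 = dm pi2" "ar s1" "ar s2" "dm s1 = dm s2" "cd s1 = dm f" "cd s2 = dm f" "f \<cdot> s1 = f \<cdot> s2"
  obtains g where "ar g" "dm g = dm s1" "cd g = dm a" "pi1 \<cdot> a \<cdot> g = s1" "pi2 \<cdot> a \<cdot> g = s2"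
proof -
  obtain g where g: "ar g" "dm g = dm s1" "cd g = dm (pi1 \<cdot> a)" "(pi1 \<cdot> a) \<cdot> g = s1" "(pi2 \<cdot> a) \<cdot> g = s2"
    by (rule pb_lift[OF pb T(6,7,8,9,10,11)])
  have "cd g = dm a" using g(3) T by simp
  moreover have "pi1 \<cdot> a \<cdot> g = s1" "pi2 \<cdot> a \<cdot> g = s2" using g(4,5) T g(1) \<open>cd g = dm a\<close> by simp_all
  ultimately show ?thesis using that g(1,2) by blast
qed

lemma ker_sq:
  assumes pb: "is_pullback C f f (pi1 \<cdot> a) (pi2 \<cdot> a)" and T: "ar pi1" "ar pi2" "ar a" "cd a = dm pi1"
    "dm pi1 = dm pi2" "ar X" "cd X = dm a"
  shows "f \<cdot> pi1 \<cdot> a \<cdot> X = f \<cdot> pi2 \<cdot> a \<cdot> X"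
proof -
  note P = pbD[OF pb]
  have "f \<cdot> (pi1 \<cdot> a) \<cdot> X = f \<cdot> (pi2 \<cdot> a) \<cdot> X"
    by (rule ext_eq[OF P(9)]) (use P T in simp_all)
  then show ?thesis using T by simp
qed

lemma majority:
  assumes hyp: "modular_distrib_hyp C"
  shows "majority_category C"
  unfolding majority_category_def
proof (intro allI impI, elim conjE)
  fix p1 p2 p3 r assume pr3: "is_product3 C p1 p2 p3" and mr: "mono C r" and rc: "cd r = dm p1"
  note D3 = prod3D[OF pr3]
  have ar_r: "ar r" using mr unfolding mono_def by blast
  show "majority_selecting C p1 p2 p3 r"
    unfolding majority_selecting_def
  proof (intro allI impI)
    fix S x x' y y' z z'
    assume hx: "hom C x S (cd p1)" and hx': "hom C x' S (cd p1)"
      and hy: "hom C y S (cd p2)" and hy': "hom C y' S (cd p2)"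
      and hz: "hom C z S (cd p3)" and hz': "hom C z' S (cd p3)"
      and m1: "mem3 C p1 p2 p3 r x y z'" and m2: "mem3 C p1 p2 p3 r x y' z"
      and m3: "mem3 C p1 p2 p3 r x' y z"
    define R where "R = dm r"
    have TX: "ar x" "dm x = S" "cd x = cd p1" "ar y" "dm y = S" "cd y = cd p2" "ar z" "dm z = S" "cd z = cd p3"
      using hx hy hz unfolding hom_def by auto
    obtain h1 where h1: "ar h1" "dm h1 = S" "cd h1 = R" "(p1 \<cdot> r) \<cdot> h1 = x" "(p2 \<cdot> r) \<cdot> h1 = y" "(p3 \<cdot> r) \<cdot> h1 = z'"
      using m1 hx unfolding mem3_def hom_def R_def by auto
    obtain h2 where h2: "ar h2" "dm h2 = S" "cd h2 = R" "(p1 \<cdot> r) \<cdot> h2 = x" "(p2 \<cdot> r) \<cdot> h2 = y'" "(p3 \<cdot> r) \<cdot> h2 = z"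
      using m2 hx unfolding mem3_def hom_def R_def by auto
    obtain h3 where h3: "ar h3" "dm h3 = S" "cd h3 = R" "(p1 \<cdot> r) \<cdot> h3 = x'" "(p2 \<cdot> r) \<cdot> h3 = y" "(p3 \<cdot> r) \<cdot> h3 = z"
      using m3 hx' unfolding mem3_def hom_def R_def by auto
    have Tr: "ar r" "dm r = R" "cd r = dm p1" "dm p2 = dm p1" "dm p3 = dm p1" "ar p1" "ar p2" "ar p3"
      using ar_r rc D3 R_def by auto
    have Tf: "ar (p1 \<cdot> r)" "ar (p2 \<cdot> r)" "ar (p3 \<cdot> r)" "dm (p1 \<cdot> r) = R" "dm (p2 \<cdot> r) = R" "dm (p3 \<cdot> r) = R"
      using Tr by simp_all
    have RO: "R \<in> Ob C" using dom_ob[OF ar_r] R_def by simp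
    obtain pi1 pi2 where pr: "is_product2 C pi1 pi2" and pic: "cd pi1 = R" "cd pi2 = R"
      using prod_ex[OF RO RO] by blast
    note DP = prodD[OF pr]
    define RR where "RR = dm pi1"
    have Tpi: "ar pi1" "ar pi2" "dm pi1 = RR" "dm pi2 = RR" "cd pi1 = R" "cd pi2 = R"
      using DP pic RR_def by auto
    obtain aY where aY: "eff_eqrel C pi1 pi2 aY" "mono C aY" "ar aY" "cd aY = RR"
      and kY: "is_pullback C (p2 \<cdot> r) (p2 \<cdot> r) (pi1 \<cdot> aY) (pi2 \<cdot> aY)"
      using kernel[OF pr _ Tf(2)] pic Tf RR_def by auto
    obtain bX where bX: "eff_eqrel C pi1 pi2 bX" "mono C bX" "ar bX" "cd bX = RR"
      and kX: "is_pullback C (p1 \<cdot> r) (p1 \<cdot> r) (pi1 \<cdot> bX) (pi2 \<cdot> bX)"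
      using kernel[OF pr _ Tf(1)] pic Tf RR_def by auto
    obtain cZ where cZ: "eff_eqrel C pi1 pi2 cZ" "mono C cZ" "ar cZ" "cd cZ = RR"
      and kZ: "is_pullback C (p3 \<cdot> r) (p3 \<cdot> r) (pi1 \<cdot> cZ) (pi2 \<cdot> cZ)"
      using kernel[OF pr _ Tf(3)] pic Tf RR_def by auto
    have Tk: "ar aY" "cd aY = dm pi1" "ar bX" "cd bX = dm pi1" "ar cZ" "cd cZ = dm pi1" "dm pi1 = dm pi2"
      using aY bX cZ Tpi by auto
    have Th: "dm h1 = dm h2" "dm h1 = dm h3" "dm h2 = dm h3" "cd h1 = dm (p1 \<cdot> r)" "cd h2 = dm (p1 \<cdot> r)"
      "cd h3 = dm (p1 \<cdot> r)" "cd h1 = dm (p2 \<cdot> r)" "cd h2 = dm (p2 \<cdot> r)"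
      "cd h3 = dm (p2 \<cdot> r)" "cd h1 = dm (p3 \<cdot> r)" "cd h2 = dm (p3 \<cdot> r)" "cd h3 = dm (p3 \<cdot> r)"
      using h1 h2 h3 Tf by auto
    obtain g1 where g1: "ar g1" "dm g1 = S" "cd g1 = dm bX" "pi1 \<cdot> bX \<cdot> g1 = h1" "pi2 \<cdot> bX \<cdot> g1 = h2"
      using ker_lift[OF kX Tpi(1,2) Tk(3,4,7) h1(1) h2(1) Th(1,4,5)] h1(4) h2(4) h1(2) by metis
    obtain g2 where g2: "ar g2" "dm g2 = S" "cd g2 = dm cZ" "pi1 \<cdot> cZ \<cdot> g2 = h2" "pi2 \<cdot> cZ \<cdot> g2 = h3"
      using ker_lift[OF kZ Tpi(1,2) Tk(5,6,7) h2(1) h3(1) Th(3,11,12)] h2(6) h3(6) h2(2) by metis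
    obtain g3 where g3: "ar g3" "dm g3 = S" "cd g3 = dm aY" "pi1 \<cdot> aY \<cdot> g3 = h1" "pi2 \<cdot> aY \<cdot> g3 = h3"
      using ker_lift[OF kY Tpi(1,2) Tk(1,2,7) h1(1) h3(1) Th(2,7,9)] h1(5) h3(5) h1(2) by metis
    have cq: "ar (pi2 \<cdot> bX)" "ar (pi1 \<cdot> cZ)" "cd (pi2 \<cdot> bX) = cd (pi1 \<cdot> cZ)"
      using Tk Tpi by auto
    obtain q1 q2 where pbq: "is_pullback C (pi2 \<cdot> bX) (pi1 \<cdot> cZ) q1 q2" using pb_ex[OF cq] by blast
    note Q = pbD[OF pbq]
    have Tq: "ar q1" "ar q2" "dm q2 = dm q1" "cd q1 = dm bX" "cd q2 = dm cZ"
      using Q Tk Tpi by auto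
    have ct: "ar ((pi1 \<cdot> bX) \<cdot> q1)" "ar ((pi2 \<cdot> cZ) \<cdot> q2)" "dm ((pi1 \<cdot> bX) \<cdot> q1) = dm ((pi2 \<cdot> cZ) \<cdot> q2)"
      "cd ((pi1 \<cdot> bX) \<cdot> q1) = cd pi1" "cd ((pi2 \<cdot> cZ) \<cdot> q2) = cd pi2"
      using Tq Tk Tpi by auto
    obtain t where t: "ar t" "dm t = dm ((pi1 \<cdot> bX) \<cdot> q1)" "cd t = dm pi1"
      "pi1 \<cdot> t = (pi1 \<cdot> bX) \<cdot> q1" "pi2 \<cdot> t = (pi2 \<cdot> cZ) \<cdot> q2"
      by (rule prod_lift[OF pr ct])
    have dt: "dm t = dm q1" using t(2) Tq Tk Tpi by simp
    obtain e mbc where e: "regular_epi C e" "mono C mbc" "ar e" "ar mbc" "dm e = dm t" "cd e = dm mbc"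
      "cd mbc = cd t" "mbc \<cdot> e = t"
      by (rule image[OF t(1)])
    have rc_bc: "rel_comp C pi1 pi2 bX cZ mbc"
      unfolding rel_comp_def
      apply (rule exI[of _ q1], rule exI[of _ q2], rule exI[of _ t], rule exI[of _ e])
      using pbq t dt e unfolding hom_def by auto
    have ci: "cd aY = cd mbc" using Tk e t by simp
    obtain u1 v1 where pb1: "is_pullback C aY mbc u1 v1" using pb_ex[OF Tk(1) e(4) ci] by blast
    note U1 = pbD[OF pb1]
    have ri_abc: "rel_inter C aY mbc (aY \<cdot> u1)" unfolding rel_inter_def using pb1 by blast
    have ci2: "cd aY = cd bX" "cd aY = cd cZ" using Tk by simp_all
    obtain uab vab where pbab: "is_pullback C aY bX uab vab" using pb_ex[OF Tk(1) Tk(3) ci2(1)] by blast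
    obtain uac vac where pbac: "is_pullback C aY cZ uac vac" using pb_ex[OF Tk(1) Tk(5) ci2(2)] by blast
    note AB = pbD[OF pbab] and AC = pbD[OF pbac]
    define ab where "ab = aY \<cdot> uab"
    define ac where "ac = aY \<cdot> uac"
    have ri_ab: "rel_inter C aY bX ab" unfolding rel_inter_def ab_def using pbab by blast
    have ri_ac: "rel_inter C aY cZ ac" unfolding rel_inter_def ac_def using pbac by blast
    have Tab: "ar ab" "ar ac" "cd ab = dm pi1" "cd ac = dm pi1" "dm ab = dm uab" "dm ac = dm uac"
      using AB AC Tk unfolding ab_def ac_def by auto
    have cq': "ar (pi2 \<cdot> ab)" "ar (pi1 \<cdot> ac)" "cd (pi2 \<cdot> ab) = cd (pi1 \<cdot> ac)"
      using Tab Tpi by auto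
    obtain q1' q2' where pbq': "is_pullback C (pi2 \<cdot> ab) (pi1 \<cdot> ac) q1' q2'" using pb_ex[OF cq'] by blast
    note Q' = pbD[OF pbq']
    have Tq': "ar q1'" "ar q2'" "dm q2' = dm q1'" "cd q1' = dm ab" "cd q2' = dm ac"
      using Q' Tab Tpi by auto
    have ct': "ar ((pi1 \<cdot> ab) \<cdot> q1')" "ar ((pi2 \<cdot> ac) \<cdot> q2')" "dm ((pi1 \<cdot> ab) \<cdot> q1') = dm ((pi2 \<cdot> ac) \<cdot> q2')"
      "cd ((pi1 \<cdot> ab) \<cdot> q1') = cd pi1" "cd ((pi2 \<cdot> ac) \<cdot> q2') = cd pi2"
      using Tq' Tab Tpi by auto
    obtain t' where t': "ar t'" "dm t' = dm ((pi1 \<cdot> ab) \<cdot> q1')" "cd t' = dm pi1"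
      "pi1 \<cdot> t' = (pi1 \<cdot> ab) \<cdot> q1'" "pi2 \<cdot> t' = (pi2 \<cdot> ac) \<cdot> q2'"
      by (rule prod_lift[OF pr ct'])
    have dt': "dm t' = dm q1'" using t'(2) Tq' Tab Tpi by simp
    obtain e' mabac where e': "regular_epi C e'" "mono C mabac" "ar e'" "ar mabac" "dm e' = dm t'" "cd e' = dm mabac"
      "cd mabac = cd t'" "mabac \<cdot> e' = t'"
      by (rule image[OF t'(1)])
    have rc_abac: "rel_comp C pi1 pi2 ab ac mabac"
      unfolding rel_comp_def
      apply (rule exI[of _ q1'], rule exI[of _ q2'], rule exI[of _ t'], rule exI[of _ e'])
      using pbq' t' dt' e' unfolding hom_def by auto
    have "same_subobj C (aY \<cdot> u1) mabac"
      using hyp[unfolded modular_distrib_hyp_def, rule_format, OF conjI[OF aY(1) conjI[OF bX(1) cZ(1)]]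
        conjI[OF rc_bc conjI[OF ri_abc conjI[OF ri_ab conjI[OF ri_ac rc_abac]]]]] .
    then obtain k where k: "ar k" "dm k = dm (aY \<cdot> u1)" "cd k = dm mabac" "mabac \<cdot> k = aY \<cdot> u1"
      unfolding same_subobj_def hom_def by blast
    have Tuv: "ar u1" "ar v1" "dm v1 = dm u1" "cd u1 = dm aY" "cd v1 = dm mbc"
      "ar uab" "ar vab" "dm vab = dm uab" "cd uab = dm aY" "cd vab = dm bX"
      "ar uac" "ar vac" "dm vac = dm uac" "cd uac = dm aY" "cd vac = dm cZ"
      using U1 AB AC by auto
    note TT = Tr Tpi Tk Tq Tq' Tuv h1(1,2,3) h2(1,2,3) h3(1,2,3) g1(1,2,3) g2(1,2,3) g3(1,2,3)
      TX e(3,4,5,6) e'(3,4,5,6) t(1,3) t'(1,3) dt dt' pic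
    obtain w where w: "ar w" "dm w = S" "cd w = dm pi1" "pi1 \<cdot> w = h1" "pi2 \<cdot> w = h3"
    proof -
      have "dm h1 = dm h3" "cd h1 = cd pi1" "cd h3 = cd pi2" using TT by simp_all
      then show ?thesis using prod_lift[OF pr h1(1) h3(1)] that h1(2) by metis
    qed
    obtain qq where qq: "ar qq" "dm qq = S" "cd qq = dm q1" "q1 \<cdot> qq = g1" "q2 \<cdot> qq = g2"
    proof -
      have c: "dm g1 = dm g2" "cd g1 = dm (pi2 \<cdot> bX)" "cd g2 = dm (pi1 \<cdot> cZ)"
        "(pi2 \<cdot> bX) \<cdot> g1 = (pi1 \<cdot> cZ) \<cdot> g2"
        using TT g1(5) g2(4) by simp_all
      show ?thesis using pb_lift[OF pbq g1(1) g2(1) c] that g1(2) by metis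
    qed
    have tqq: "t \<cdot> qq = w"
    proof (rule prod_uniq[OF pr])
      have "pi1 \<cdot> (t \<cdot> qq) = ((pi1 \<cdot> bX) \<cdot> q1) \<cdot> qq" by (rule ext1[OF t(4)]) (use TT qq in simp_all)
      then show "pi1 \<cdot> (t \<cdot> qq) = pi1 \<cdot> w" using TT qq w g1(4) by simp
      have "pi2 \<cdot> (t \<cdot> qq) = ((pi2 \<cdot> cZ) \<cdot> q2) \<cdot> qq" by (rule ext1[OF t(5)]) (use TT qq in simp_all)
      then show "pi2 \<cdot> (t \<cdot> qq) = pi2 \<cdot> w" using TT qq w g2(5) by simp
    qed (use TT qq w in simp_all)
    have meqq: "mbc \<cdot> (e \<cdot> qq) = w"
      using ext1[OF e(8), of qq] TT qq tqq by simp
    have ag3: "aY \<cdot> g3 = w"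
      by (rule prod_uniq[OF pr]) (use TT w g3(4,5) in simp_all)
    obtain l where l: "ar l" "dm l = S" "cd l = dm u1" "u1 \<cdot> l = g3" "v1 \<cdot> l = e \<cdot> qq"
    proof -
      have c: "ar (e \<cdot> qq)" "dm g3 = dm (e \<cdot> qq)" "cd g3 = dm aY" "cd (e \<cdot> qq) = dm mbc" "aY \<cdot> g3 = mbc \<cdot> (e \<cdot> qq)"
        using TT qq ag3 meqq e by simp_all
      show ?thesis using pb_lift[OF pb1 g3(1) c] that g3(2) by metis
    qed
    have mkl: "mabac \<cdot> (k \<cdot> l) = w"
      using ext1[OF k(4), of l] TT k l ag3 by simp
    have ckl: "ar (k \<cdot> l)" "cd e' = cd (k \<cdot> l)" "dm (k \<cdot> l) = S" using TT k l by simp_all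
    obtain PP QQ where pbP: "is_pullback C e' (k \<cdot> l) PP QQ" using pb_ex[OF e'(3) ckl(1,2)] by blast
    note PQ = pbD[OF pbP]
    have reQ: "regular_epi C QQ" by (rule re_stable[OF pbP e'(1)])
    have TP: "ar PP" "ar QQ" "dm PP = dm QQ" "cd PP = dm q1'" "cd QQ = S"
      using PQ TT ckl e' by auto
    have tPP: "t' \<cdot> PP = w \<cdot> QQ"
    proof -
      have 1: "mabac \<cdot> (e' \<cdot> PP) = t' \<cdot> PP" by (rule ext1[OF e'(8)]) (use TT TP e' in simp_all)
      have 2: "mabac \<cdot> ((k \<cdot> l) \<cdot> QQ) = w \<cdot> QQ" by (rule ext1[OF mkl]) (use TT TP k l in simp_all)
      show ?thesis using 1 2 PQ(9) by metis
    qed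
    have Tab2: "cd q1' = dm uab" "cd q2' = dm uac" using Tq' Tab by simp_all
    note TT2 = TT TP Tab2
    have E1: "pi1 \<cdot> aY \<cdot> uab \<cdot> q1' \<cdot> PP = h1 \<cdot> QQ"
    proof -
      have "pi1 \<cdot> (t' \<cdot> PP) = ((pi1 \<cdot> ab) \<cdot> q1') \<cdot> PP" by (rule ext1[OF t'(4)]) (use TT2 in simp_all)
      moreover have "pi1 \<cdot> (w \<cdot> QQ) = h1 \<cdot> QQ" by (rule ext1[OF w(4)]) (use TT2 w in simp_all)
      ultimately show ?thesis using tPP TT2 unfolding ab_def by simp
    qed
    have E3: "pi2 \<cdot> aY \<cdot> uac \<cdot> q2' \<cdot> PP = h3 \<cdot> QQ"
    proof -
      have "pi2 \<cdot> (t' \<cdot> PP) = ((pi2 \<cdot> ac) \<cdot> q2') \<cdot> PP" by (rule ext1[OF t'(5)]) (use TT2 in simp_all)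
      moreover have "pi2 \<cdot> (w \<cdot> QQ) = h3 \<cdot> QQ" by (rule ext1[OF w(5)]) (use TT2 w in simp_all)
      ultimately show ?thesis using tPP TT2 unfolding ac_def by simp
    qed
    have Sq: "pi2 \<cdot> aY \<cdot> uab \<cdot> q1' \<cdot> PP = pi1 \<cdot> aY \<cdot> uac \<cdot> q2' \<cdot> PP"
    proof -
      have "(pi2 \<cdot> ab) \<cdot> q1' \<cdot> PP = (pi1 \<cdot> ac) \<cdot> q2' \<cdot> PP" by (rule ext_eq[OF Q'(9)]) (use TT2 Tab in simp_all)
      then show ?thesis using TT2 unfolding ab_def ac_def by simp
    qed
    have SqB: "pi2 \<cdot> aY \<cdot> uab \<cdot> q1' \<cdot> PP = pi2 \<cdot> bX \<cdot> vab \<cdot> q1' \<cdot> PP"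
      "pi1 \<cdot> aY \<cdot> uab \<cdot> q1' \<cdot> PP = pi1 \<cdot> bX \<cdot> vab \<cdot> q1' \<cdot> PP"
    proof -
      have "aY \<cdot> uab \<cdot> (q1' \<cdot> PP) = bX \<cdot> vab \<cdot> (q1' \<cdot> PP)" by (rule ext_eq[OF AB(9)]) (use TT2 in simp_all)
      then show "pi2 \<cdot> aY \<cdot> uab \<cdot> q1' \<cdot> PP = pi2 \<cdot> bX \<cdot> vab \<cdot> q1' \<cdot> PP"
        "pi1 \<cdot> aY \<cdot> uab \<cdot> q1' \<cdot> PP = pi1 \<cdot> bX \<cdot> vab \<cdot> q1' \<cdot> PP" by simp_all
    qed
    have SqC: "pi1 \<cdot> aY \<cdot> uac \<cdot> q2' \<cdot> PP = pi1 \<cdot> cZ \<cdot> vac \<cdot> q2' \<cdot> PP"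
      "pi2 \<cdot> aY \<cdot> uac \<cdot> q2' \<cdot> PP = pi2 \<cdot> cZ \<cdot> vac \<cdot> q2' \<cdot> PP"
    proof -
      have "aY \<cdot> uac \<cdot> (q2' \<cdot> PP) = cZ \<cdot> vac \<cdot> (q2' \<cdot> PP)" by (rule ext_eq[OF AC(9)]) (use TT2 in simp_all)
      then show "pi1 \<cdot> aY \<cdot> uac \<cdot> q2' \<cdot> PP = pi1 \<cdot> cZ \<cdot> vac \<cdot> q2' \<cdot> PP"
        "pi2 \<cdot> aY \<cdot> uac \<cdot> q2' \<cdot> PP = pi2 \<cdot> cZ \<cdot> vac \<cdot> q2' \<cdot> PP" by simp_all
    qed
    have KY: "p2 \<cdot> r \<cdot> pi1 \<cdot> aY \<cdot> uab \<cdot> q1' \<cdot> PP = p2 \<cdot> r \<cdot> pi2 \<cdot> aY \<cdot> uab \<cdot> q1' \<cdot> PP"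
      using ker_sq[OF kY Tpi(1,2) Tk(1,2,7), of "uab \<cdot> q1' \<cdot> PP"] TT2 by simp
    have KX: "p1 \<cdot> r \<cdot> pi1 \<cdot> bX \<cdot> vab \<cdot> q1' \<cdot> PP = p1 \<cdot> r \<cdot> pi2 \<cdot> bX \<cdot> vab \<cdot> q1' \<cdot> PP"
      using ker_sq[OF kX Tpi(1,2) Tk(3,4,7), of "vab \<cdot> q1' \<cdot> PP"] TT2 by simp
    have KZ: "p3 \<cdot> r \<cdot> pi1 \<cdot> cZ \<cdot> vac \<cdot> q2' \<cdot> PP = p3 \<cdot> r \<cdot> pi2 \<cdot> cZ \<cdot> vac \<cdot> q2' \<cdot> PP"
      using ker_sq[OF kZ Tpi(1,2) Tk(5,6,7), of "vac \<cdot> q2' \<cdot> PP"] TT2 by simp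
    have Hx: "p1 \<cdot> r \<cdot> h1 \<cdot> QQ = x \<cdot> QQ" using ext1[OF h1(4), of QQ] TT2 by simp
    have Hy: "p2 \<cdot> r \<cdot> h1 \<cdot> QQ = y \<cdot> QQ" using ext1[OF h1(5), of QQ] TT2 by simp
    have Hz: "p3 \<cdot> r \<cdot> h3 \<cdot> QQ = z \<cdot> QQ" using ext1[OF h3(6), of QQ] TT2 by simp
    have DX: "p1 \<cdot> r \<cdot> pi2 \<cdot> aY \<cdot> uab \<cdot> q1' \<cdot> PP = x \<cdot> QQ"
      using KX SqB E1 Hx by simp
    have DY: "p2 \<cdot> r \<cdot> pi2 \<cdot> aY \<cdot> uab \<cdot> q1' \<cdot> PP = y \<cdot> QQ"
      using KY E1 Hy by simp
    have DZ: "p3 \<cdot> r \<cdot> pi2 \<cdot> aY \<cdot> uab \<cdot> q1' \<cdot> PP = z \<cdot> QQ"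
      using KZ Sq SqC E3 Hz by simp
    have cxyz: "dm y = dm x" "dm z = dm x" using TX by simp_all
    obtain n where n: "ar n" "dm n = S" "cd n = dm p1" "p1 \<cdot> n = x" "p2 \<cdot> n = y" "p3 \<cdot> n = z"
      using prod3_lift[OF pr3 TX(1,4,7) cxyz TX(3,6,9)] TX(2) by metis
    have Td: "ar (pi2 \<cdot> aY \<cdot> uab \<cdot> q1' \<cdot> PP)" "dm (pi2 \<cdot> aY \<cdot> uab \<cdot> q1' \<cdot> PP) = dm QQ"
      "cd (pi2 \<cdot> aY \<cdot> uab \<cdot> q1' \<cdot> PP) = dm r"
      using TT2 R_def by simp_all
    have rd: "r \<cdot> pi2 \<cdot> aY \<cdot> uab \<cdot> q1' \<cdot> PP = n \<cdot> QQ"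
    proof (rule prod3_uniq[OF pr3])
      show "p1 \<cdot> r \<cdot> pi2 \<cdot> aY \<cdot> uab \<cdot> q1' \<cdot> PP = p1 \<cdot> n \<cdot> QQ"
        using DX ext1[OF n(4), of QQ] n TT2 by simp
      show "p2 \<cdot> r \<cdot> pi2 \<cdot> aY \<cdot> uab \<cdot> q1' \<cdot> PP = p2 \<cdot> n \<cdot> QQ"
        using DY ext1[OF n(5), of QQ] n TT2 by simp
      show "p3 \<cdot> r \<cdot> pi2 \<cdot> aY \<cdot> uab \<cdot> q1' \<cdot> PP = p3 \<cdot> n \<cdot> QQ"
        using DZ ext1[OF n(6), of QQ] n TT2 by simp
    qed (use TT2 n in simp_all)
    have cn: "dm n = cd QQ" "cd n = cd r" using n TT2 by simp_all
    obtain h where h: "ar h" "dm h = cd QQ" "cd h = dm r" "r \<cdot> h = n"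
      by (rule mono_lift[OF reQ mr n(1) Td(1) Td(2) Td(3) cn rd])
    have "(p1 \<cdot> r) \<cdot> h = x" "(p2 \<cdot> r) \<cdot> h = y" "(p3 \<cdot> r) \<cdot> h = z"
      using h n TT2 by simp_all
    then show "mem3 C p1 p2 p3 r x y z"
      unfolding mem3_def hom_def using h TT2 by auto
  qed
qed

end


theorem lemma3p2:
  fixes C :: "('o, 'a) cat"
  assumes "regular_category C"
    and "modular_distrib_hyp C"
  shows "majority_category C"
proof -
  interpret rcat C
    using assms(1) by unfold_locales (auto simp: regular_category_def)
  show ?thesis using majority[OF assms(2)] .
qed

end
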